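(* Let $R$ be a $\lambda$-ring and let $x\in R$ be an element which is both even (of some finite degree) and odd (of some finite degree). Then $\lambda^i(x)$ is nilpotent for every $i\ge 1$ (in particular $x=\lambda^1(x)$ is nilpotent), and $\lambda_t(x)$ is a unit of the polynomial ring $R[t]$.
   Context: A $\lambda$-ring means a special $\lambda$-ring in the sense of SGA6: a commutative ring $R$ with operations $\lambda^n:R\to R$ ($n\ge0$), $\lambda^0=1$, $\lambda^1=\mathrm{id}$, such that $\lambda_t(x)=\sum_n\lambda^n(x)t^n$ satisfies $\lambda_t(x+y)=\lambda_t(x)\lambda_t(y)$ together with the universal polynomial identities for $\lambda^n(xy)$ and $\lambda^m(\lambda^n(x))$. Set $\sigma_t(x)=\sum_n\sigma^n(x)t^n=\lambda_{-t}(x)^{-1}$. An element $x$ is even of degree $n$ if $\lambda_t(x)$ is a polynomial of degree $n$, and odd of degree $n$ if $\sigma_t(x)$ is a polynomial of degree $n$. *)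

theory Defs
  imports "HOL-Computational_Algebra.Polynomial_FPS"
begin

text \<open>Integer polynomials in countably many variables, represented as lists of
  terms (coefficient, exponent list); the term (c, [a0,...,ak]) is c * X0^a0 * ... * Xk^ak.\<close>
type_synonym zpoly = "(int \<times> nat list) list"

definition zpoly_eval :: "zpoly \<Rightarrow> (nat \<Rightarrow> 'a::comm_ring_1) \<Rightarrow> 'a" where
  "zpoly_eval P v = (\<Sum>(c, es)\<leftarrow>P. of_int c * (\<Prod>k<length es. v k ^ (es ! k)))"

definition esym :: "nat \<Rightarrow> 'i set \<Rightarrow> ('i \<Rightarrow> 'a::comm_ring_1) \<Rightarrow> 'a" where
  "esym k I a = (\<Sum>T\<in>{T. T \<subseteq> I \<and> card T = k}. prod a T)"

text \<open>P is (a representative of) the universal polynomial P_n: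
  coefficient of u^n in prod_{i,j<n} (1 + xi_i eta_j u), written in the elementary
  symmetric functions s_1..s_n of xi (variables 0..n-1) and t_1..t_n of eta
  (variables n..2n-1).  Identity over all integer points, which determines the
  polynomial identity.\<close>
definition is_P_prod :: "nat \<Rightarrow> zpoly \<Rightarrow> bool" where
  "is_P_prod n P \<longleftrightarrow> (\<forall>\<xi> \<eta> :: nat \<Rightarrow> int.
     zpoly_eval P (\<lambda>k. if k < n then esym (k+1) {..<n} \<xi>
                       else if k < 2*n then esym (k+1-n) {..<n} \<eta> else 0)
     = esym n ({..<n} \<times> {..<n}) (\<lambda>(i,j). \<xi> i * \<eta> j))"

text \<open>P is (a representative of) the universal polynomial P_{m,n}:
  coefficient of u^m in prod_{i_1<...<i_n} (1 + xi_{i_1}...xi_{i_n} u),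
  written in the elementary symmetric functions s_1..s_{mn} of xi_1..xi_{mn}.\<close>
definition is_P_comp :: "nat \<Rightarrow> nat \<Rightarrow> zpoly \<Rightarrow> bool" where
  "is_P_comp m n P \<longleftrightarrow> (\<forall>\<xi> :: nat \<Rightarrow> int.
     zpoly_eval P (\<lambda>k. if k < m*n then esym (k+1) {..<m*n} \<xi> else 0)
     = esym m {S. S \<subseteq> {..<m*n} \<and> card S = n} (\<lambda>S. prod \<xi> S))"

definition lambda_ring :: "(nat \<Rightarrow> 'a::comm_ring_1 \<Rightarrow> 'a) \<Rightarrow> bool" where
  "lambda_ring lam \<longleftrightarrow>
     (\<forall>x. lam 0 x = 1) \<and> (\<forall>x. lam 1 x = x) \<and>
     (\<forall>n x y. lam n (x + y) = (\<Sum>i\<le>n. lam i x * lam (n - i) y)) \<and>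
     (\<forall>n\<ge>2. lam n 1 = 0) \<and>
     (\<forall>n P x y. is_P_prod n P \<longrightarrow>
        lam n (x * y) = zpoly_eval P (\<lambda>k. if k < n then lam (k+1) x
                          else if k < 2*n then lam (k+1-n) y else 0)) \<and>
     (\<forall>m n P x. is_P_comp m n P \<longrightarrow>
        lam m (lam n x) = zpoly_eval P (\<lambda>k. if k < m*n then lam (k+1) x else 0))"

definition lambda_t :: "(nat \<Rightarrow> 'a::comm_ring_1 \<Rightarrow> 'a) \<Rightarrow> 'a \<Rightarrow> 'a fps" where
  "lambda_t lam x = Abs_fps (\<lambda>n. lam n x)"

definition lambda_negt :: "(nat \<Rightarrow> 'a::comm_ring_1 \<Rightarrow> 'a) \<Rightarrow> 'a \<Rightarrow> 'a fps" where
  "lambda_negt lam x = Abs_fps (\<lambda>n. (-1)^n * lam n x)"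

definition even_deg :: "(nat \<Rightarrow> 'a::comm_ring_1 \<Rightarrow> 'a) \<Rightarrow> 'a \<Rightarrow> nat \<Rightarrow> bool" where
  "even_deg lam x n \<longleftrightarrow> (\<exists>p. degree p = n \<and> fps_of_poly p = lambda_t lam x)"

text \<open>x is odd of degree n: sigma_t(x) = lambda_{-t}(x)^{-1} is a polynomial of degree n,
  i.e. the inverse of lambda_{-t}(x) in R[[t]] is a polynomial of degree n.\<close>
definition odd_deg :: "(nat \<Rightarrow> 'a::comm_ring_1 \<Rightarrow> 'a) \<Rightarrow> 'a \<Rightarrow> nat \<Rightarrow> bool" where
  "odd_deg lam x n \<longleftrightarrow> (\<exists>q. degree q = n \<and> fps_of_poly q * lambda_negt lam x = 1)"

end

theory Submission
  imports Defs
begin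

lemma unit_plus_nilp:
  fixes u N :: "'b::comm_ring_1"
  assumes "u dvd 1" "N ^ k = 0"
  shows "(u + N) dvd 1"
proof -
  obtain v where v: "1 = u * v" using assms(1) by (auto elim: dvdE)
  define M where "M = - (v * N)"
  have Mk: "M ^ k = 0" unfolding M_def
    by (simp add: power_minus' power_mult_distrib assms(2))
  have "1 = (1 - M) * (\<Sum>i<k. M ^ i)"
    using one_diff_power_eq[of M k] Mk by simp
  hence d1: "(1 - M) dvd 1" by (metis dvdI)
  have "u + N = u * (1 - M)" unfolding M_def using v
    by (simp add: algebra_simps)
  thus ?thesis using mult_dvd_mono[OF assms(1) d1] by simp
qed

lemma lead_nilp:
  fixes f g :: "'b::comm_ring_1 poly"
  assumes fg: "f * g = 1" and deg: "degree f \<ge> 1"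
  shows "\<exists>k. lead_coeff f ^ k = 0"
proof -
  define a where "a = lead_coeff f"
  define n where "n = degree f"
  define m where "m = degree g"
  have Q: "\<forall>j. m < j + k \<longrightarrow> a ^ k * coeff g j = 0" for k
  proof (induction k)
    case 0
    then show ?case by (simp add: m_def coeff_eq_0)
  next
    case (Suc k)
    show ?case
    proof (intro allI impI)
      fix j assume j: "m < j + Suc k"
      show "a ^ Suc k * coeff g j = 0"
      proof (cases "m < j + k")
        case True
        then show ?thesis using Suc.IH by (simp add: mult.assoc)
      next
        case False
        hence jk: "j + k = m" using j by simp
        define h where "h = smult (a ^ k) g"
        have hc: "coeff h i = 0" if "i > j" for i
          using Suc.IH that jk unfolding h_def by simp
        have dh: "degree h \<le> j"
          by (rule degree_le) (use hc in auto)
        have "coeff h j * a = 0"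
        proof (cases "degree h < j")
          case True
          then show ?thesis by (simp add: coeff_eq_0)
        next
          case False
          hence dhj: "degree h = j" using dh by simp
          have "f * h = [:a ^ k:]" unfolding h_def
            by (metis fg mult_smult_right smult_one)
          hence "coeff (f * h) (n + j) = 0" using deg n_def by (simp add: coeff_pCons split: nat.splits)
          moreover have "coeff (f * h) (n + j) = a * coeff h j"
            using coeff_mult_degree_sum[of f h] dhj n_def a_def by simp
          ultimately show ?thesis by (simp add: mult.commute)
        qed
        thus ?thesis unfolding h_def by (simp add: mult_ac)
      qed
    qed
  qed
  have "a ^ Suc m * coeff g 0 = 0" using Q[of "Suc m"] by simp
  moreover have "coeff f 0 * coeff g 0 = 1"
    using arg_cong[OF fg, of "\<lambda>p. coeff p 0"] by (simp add: coeff_mult)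
  ultimately have "a ^ Suc m = 0"
    by (metis mult.assoc mult.commute mult_1 mult_zero_left)
  thus ?thesis unfolding a_def by blast
qed

lemma unit_coeffs_nilp:
  fixes f :: "'b::comm_ring_1 poly"
  shows "f dvd 1 \<Longrightarrow> i \<ge> 1 \<Longrightarrow> \<exists>k. coeff f i ^ k = 0"
proof (induction "degree f" arbitrary: f i rule: less_induct)
  case less
  show ?case
  proof (cases "degree f = 0")
    case True
    then have "coeff f i = 0" using less.prems by (simp add: coeff_eq_0)
    then show ?thesis by (metis power_one_right)
  next
    case False
    define n where "n = degree f"
    define a where "a = lead_coeff f"
    obtain g where fg: "1 = f * g" using less.prems(1) by (auto elim: dvdE)
    obtain k where ak: "a ^ k = 0" using lead_nilp[of f g] fg False a_def by fastforce
    define f' where "f' = f + monom (- a) n"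
    have "(monom (- a) n) ^ k = 0"
      by (simp add: monom_power power_minus' ak)
    hence u: "f' dvd 1" unfolding f'_def using unit_plus_nilp less.prems(1) by blast
    have cf: "coeff f' i = (if i = n then 0 else coeff f i)" for i
      unfolding f'_def a_def n_def by (simp add: coeff_monom)
    have "degree f' \<le> n - 1"
      by (rule degree_le) (use cf False n_def in \<open>auto simp: coeff_eq_0\<close>)
    hence dl: "degree f' < degree f" using False n_def by simp
    show ?thesis
    proof (cases "i = n")
      case True
      then show ?thesis using ak a_def n_def by blast
    next
      case False
      then show ?thesis using less.hyps[OF dl u less.prems(2)] cf by simp
    qed
  qed
qed

theorem mainTheorem1:
  fixes lam :: "nat \<Rightarrow> 'a::comm_ring_1 \<Rightarrow> 'a" and x :: 'a
  assumes "lambda_ring lam"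
    and "\<exists>n. even_deg lam x n"
    and "\<exists>m. odd_deg lam x m"
  shows "(\<forall>i\<ge>1. \<exists>k. lam i x ^ k = 0) \<and>
         (\<forall>p. fps_of_poly p = lambda_t lam x \<longrightarrow> p dvd 1)"
proof -
  obtain p0 where p0: "fps_of_poly p0 = lambda_t lam x"
    using assms(2) unfolding even_deg_def by blast
  obtain q where q: "fps_of_poly q * lambda_negt lam x = 1"
    using assms(3) unfolding odd_deg_def by blast
  have key: "p dvd 1" if p: "fps_of_poly p = lambda_t lam x" for p
  proof -
    define p' where "p' = pcompose p [:0, -1:]"
    have cp: "coeff p i = lam i x" for i
      using arg_cong[OF p, of "\<lambda>f. fps_nth f i"] by (simp add: lambda_t_def)
    have "fps_of_poly p' = lambda_negt lam x"
      by (rule fps_ext) (simp add: p'_def coeff_pcompose_linear cp lambda_negt_def)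
    hence "fps_of_poly (q * p') = 1" using q by (simp add: fps_of_poly_mult)
    hence qp: "q * p' = 1" by (metis fps_of_poly_1 fps_of_poly_eq_iff)
    have "pcompose p' [:0, -1:] = p"
      by (rule poly_eqI) (simp add: p'_def coeff_pcompose_linear power_mult_distrib[symmetric])
    moreover have "pcompose q [:0, -1:] * pcompose p' [:0, -1:] = 1"
      using qp by (metis pcompose_1 pcompose_mult)
    ultimately show ?thesis by (metis dvdI mult.commute)
  qed
  have "\<exists>k. lam i x ^ k = 0" if "i \<ge> 1" for i
  proof -
    have "coeff p0 i = lam i x"
      using arg_cong[OF p0, of "\<lambda>f. fps_nth f i"] by (simp add: lambda_t_def)
    thus ?thesis using unit_coeffs_nilp[OF key[OF p0] that] by simp
  qed
  thus ?thesis using key by blast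
qed

end
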